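(* Let $A$ be a finite set with $N\ge 2$ elements and let $(v_{xy})$ be a Llull matrix on $A$ with CLC structure such that $t_{xy}>0$ for all distinct $x,y\in A$. Define $\rho_x=\frac{1}{N-1}\sum_{y\neq x}v_{xy}$ and $\sigma_x=\frac{1}{N-1}\sum_{y\neq x}v_{xy}/t_{xy}$. Then for all $x,y\in A$, $\sigma_x>\sigma_y$ if and only if $\rho_x>\rho_y$.
   Context: A Llull matrix on a finite set $A$ is an assignment to each ordered pair of distinct elements $x\neq y$ of $A$ of a number $v_{xy}\in[0,1]$ such that $v_{xy}+v_{yx}\le 1$. Turnouts: $t_{xy}=v_{xy}+v_{yx}$; margins: $m_{xy}=v_{xy}-v_{yx}$. The matrix has CLC structure if there is a total order $\xi$ on $A$ such that, writing $x<_\xi y$ when $x$ precedes $y$ and $x'$ for the immediate successor of $x$ in $\xi$ (when it exists): (i) $v_{xy}\ge v_{yx}$ whenever $x<_\xi y$; (ii) $v_{xz}=\max(v_{xy},v_{yz})$ whenever $x<_\xi y<_\xi z$; (iii) $v_{zx}=\min(v_{zy},v_{yx})$ whenever $x<_\xi y<_\xi z$; (iv) $0\le t_{xz}-t_{x'z}\le m_{xx'}$ whenever $x'$ exists and $z\notin\{x,x'\}$. *)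

theory Defs
  imports Complex_Main
begin

definition llull_matrix :: "'a set \<Rightarrow> ('a \<Rightarrow> 'a \<Rightarrow> real) \<Rightarrow> bool" where
  "llull_matrix A v \<longleftrightarrow>
     (\<forall>x\<in>A. \<forall>y\<in>A. x \<noteq> y \<longrightarrow> 0 \<le> v x y \<and> v x y \<le> 1 \<and> v x y + v y x \<le> 1)"

definition turnout :: "('a \<Rightarrow> 'a \<Rightarrow> real) \<Rightarrow> 'a \<Rightarrow> 'a \<Rightarrow> real" where
  "turnout v x y = v x y + v y x"

definition margin :: "('a \<Rightarrow> 'a \<Rightarrow> real) \<Rightarrow> 'a \<Rightarrow> 'a \<Rightarrow> real" where
  "margin v x y = v x y - v y x"

definition prec :: "'a rel \<Rightarrow> 'a \<Rightarrow> 'a \<Rightarrow> bool" where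
  "prec r x y \<longleftrightarrow> (x, y) \<in> r \<and> x \<noteq> y"

definition imm_succ :: "'a set \<Rightarrow> 'a rel \<Rightarrow> 'a \<Rightarrow> 'a \<Rightarrow> bool" where
  "imm_succ A r x y \<longleftrightarrow> x \<in> A \<and> y \<in> A \<and> prec r x y \<and>
     \<not> (\<exists>z\<in>A. prec r x z \<and> prec r z y)"

definition clc_order :: "'a set \<Rightarrow> ('a \<Rightarrow> 'a \<Rightarrow> real) \<Rightarrow> 'a rel \<Rightarrow> bool" where
  "clc_order A v r \<longleftrightarrow>
     linear_order_on A r \<and>
     (\<forall>x\<in>A. \<forall>y\<in>A. prec r x y \<longrightarrow> v x y \<ge> v y x) \<and>
     (\<forall>x\<in>A. \<forall>y\<in>A. \<forall>z\<in>A. prec r x y \<and> prec r y z \<longrightarrow> v x z = max (v x y) (v y z)) \<and>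
     (\<forall>x\<in>A. \<forall>y\<in>A. \<forall>z\<in>A. prec r x y \<and> prec r y z \<longrightarrow> v z x = min (v z y) (v y x)) \<and>
     (\<forall>x\<in>A. \<forall>x'\<in>A. \<forall>z\<in>A. imm_succ A r x x' \<and> z \<noteq> x \<and> z \<noteq> x' \<longrightarrow>
        0 \<le> turnout v x z - turnout v x' z \<and> turnout v x z - turnout v x' z \<le> margin v x x')"

definition has_clc_structure :: "'a set \<Rightarrow> ('a \<Rightarrow> 'a \<Rightarrow> real) \<Rightarrow> bool" where
  "has_clc_structure A v \<longleftrightarrow> (\<exists>r. clc_order A v r)"

end

theory Submission
  imports Defs
begin

lemma ratio_mono:
  fixes a a' b b' :: real
  assumes "0 \<le> a" "a \<le> a'" "0 \<le> b'" "b' \<le> b" "a + b > 0" "a' + b' > 0"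
  shows "a / (a + b) \<le> a' / (a' + b')"
proof -
  have "a * b' \<le> a' * b" using assms by (intro mult_mono) auto
  hence "a * (a' + b') \<le> a' * (a + b)" by (simp add: algebra_simps)
  thus ?thesis using assms by (simp add: divide_simps mult.commute)
qed

lemma sum_eq_termwise:
  fixes f g :: "'b \<Rightarrow> real"
  assumes "finite B" "\<And>z. z \<in> B \<Longrightarrow> f z \<le> g z" "sum f B = sum g B"
  shows "\<forall>z\<in>B. f z = g z"
proof (rule ccontr)
  assume "\<not> (\<forall>z\<in>B. f z = g z)"
  then obtain z where "z \<in> B" "f z < g z" using assms(2) by (meson less_le)
  hence "sum f B < sum g B" using sum_strict_mono_ex1[OF assms(1)] assms(2) by blast
  thus False using assms(3) by simp
qed

lemma lin_facts:
  assumes "linear_order_on A r"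
  shows "trans r" "antisym r" "total_on A r"
  using assms unfolding order_on_defs by auto

lemma prec_trans:
  assumes "linear_order_on A r" "prec r a b" "prec r b c"
  shows "prec r a c"
  using assms lin_facts[OF assms(1)] unfolding prec_def trans_def antisym_def by blast

lemma prec_total:
  assumes "linear_order_on A r" "a \<in> A" "b \<in> A" "a \<noteq> b"
  shows "prec r a b \<or> prec r b a"
  using assms lin_facts[OF assms(1)] unfolding prec_def total_on_def by blast

lemma prec_asym:
  assumes "linear_order_on A r" "prec r a b"
  shows "\<not> prec r b a"
  using assms lin_facts[OF assms(1)] unfolding prec_def antisym_def by blast

definition SR :: "'a set \<Rightarrow> ('a \<Rightarrow> 'a \<Rightarrow> real) \<Rightarrow> 'a \<Rightarrow> real" where
  "SR A v x = (\<Sum>y\<in>A - {x}. v x y)"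
definition SS :: "'a set \<Rightarrow> ('a \<Rightarrow> 'a \<Rightarrow> real) \<Rightarrow> 'a \<Rightarrow> real" where
  "SS A v x = (\<Sum>y\<in>A - {x}. v x y / turnout v x y)"

lemma step:
  assumes fin: "finite A" and ll: "llull_matrix A v" and clc: "clc_order A v r"
    and tp: "\<forall>x\<in>A. \<forall>y\<in>A. x \<noteq> y \<longrightarrow> turnout v x y > 0"
    and isu: "imm_succ A r x x'"
  shows "SR A v x \<ge> SR A v x'" "SS A v x \<ge> SS A v x'"
    "SR A v x = SR A v x' \<longleftrightarrow> SS A v x = SS A v x'"
proof -
  have lin: "linear_order_on A r" using clc unfolding clc_order_def by blast
  have xA: "x \<in> A" and x'A: "x' \<in> A" and pxx: "prec r x x'"
    and nb: "\<not> (\<exists>z\<in>A. prec r x z \<and> prec r z x')" using isu unfolding imm_succ_def by auto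
  have neq: "x \<noteq> x'" using pxx unfolding prec_def by simp
  have c1: "\<And>a b. a\<in>A \<Longrightarrow> b\<in>A \<Longrightarrow> prec r a b \<Longrightarrow> v a b \<ge> v b a"
    using clc unfolding clc_order_def by blast
  have c2: "\<And>a b c. a\<in>A \<Longrightarrow> b\<in>A \<Longrightarrow> c\<in>A \<Longrightarrow> prec r a b \<Longrightarrow> prec r b c \<Longrightarrow> v a c = max (v a b) (v b c)"
    using clc unfolding clc_order_def by blast
  have c3: "\<And>a b c. a\<in>A \<Longrightarrow> b\<in>A \<Longrightarrow> c\<in>A \<Longrightarrow> prec r a b \<Longrightarrow> prec r b c \<Longrightarrow> v c a = min (v c b) (v b a)"
    using clc unfolding clc_order_def by blast
  have c4: "\<And>z. z\<in>A \<Longrightarrow> z \<noteq> x \<Longrightarrow> z \<noteq> x' \<Longrightarrow>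
        0 \<le> turnout v x z - turnout v x' z \<and> turnout v x z - turnout v x' z \<le> margin v x x'"
    using clc xA x'A isu unfolding clc_order_def by blast
  have nn: "\<And>a b. a\<in>A \<Longrightarrow> b\<in>A \<Longrightarrow> a \<noteq> b \<Longrightarrow> 0 \<le> v a b"
    using ll unfolding llull_matrix_def by blast
  let ?B = "A - {x, x'}"
  have side: "\<And>z. z \<in> ?B \<Longrightarrow> prec r z x \<or> prec r x' z"
  proof -
    fix z assume z: "z \<in> ?B"
    have "prec r z x \<or> prec r x z" using prec_total[OF lin, of z x] z xA by auto
    moreover have "prec r z x' \<or> prec r x' z" using prec_total[OF lin, of z x'] z x'A by auto
    ultimately show "prec r z x \<or> prec r x' z" using nb z by blast
  qed
  have termR: "\<And>z. z \<in> ?B \<Longrightarrow> v x' z \<le> v x z"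
  proof -
    fix z assume z: "z \<in> ?B"
    show "v x' z \<le> v x z"
    proof (cases "prec r z x")
      case True
      then show ?thesis using c3[of z x x'] z xA x'A pxx by auto
    next
      case False
      then have "prec r x' z" using side z by blast
      then show ?thesis using c2[of x x' z] z xA x'A pxx by auto
    qed
  qed
  have termS: "\<And>z. z \<in> ?B \<Longrightarrow> v x' z / turnout v x' z \<le> v x z / turnout v x z"
  proof -
    fix z assume z: "z \<in> ?B"
    have t1: "turnout v x' z > 0" "turnout v x z > 0" using tp z xA x'A by auto
    have n: "0 \<le> v x' z" "0 \<le> v z x" using nn z xA x'A by auto
    have "v z x \<le> v z x'"
    proof (cases "prec r z x")
      case True
      then show ?thesis using c2[of z x x'] z xA x'A pxx by auto
    next
      case False
      then have "prec r x' z" using side z by blast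
      then show ?thesis using c3[of x x' z] z xA x'A pxx by auto
    qed
    thus "v x' z / turnout v x' z \<le> v x z / turnout v x z"
      using ratio_mono[of "v x' z" "v x z" "v z x" "v z x'"] termR[OF z] n t1
      unfolding turnout_def by auto
  qed
  have finB: "finite ?B" using fin by auto
  have splitx: "A - {x} = insert x' ?B" using x'A neq by auto
  have splitx': "A - {x'} = insert x ?B" using xA neq by auto
  have SRx: "SR A v x = v x x' + sum (v x) ?B"
    unfolding SR_def splitx by (subst sum.insert) (use finB in auto)
  have SRx': "SR A v x' = v x' x + sum (v x') ?B"
    unfolding SR_def splitx' by (subst sum.insert) (use finB in auto)
  have SSx: "SS A v x = v x x' / turnout v x x' + (\<Sum>z\<in>?B. v x z / turnout v x z)"
    unfolding SS_def splitx by (subst sum.insert) (use finB in auto)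
  have SSx': "SS A v x' = v x' x / turnout v x' x + (\<Sum>z\<in>?B. v x' z / turnout v x' z)"
    unfolding SS_def splitx' by (subst sum.insert) (use finB in auto)
  have tsym: "turnout v x' x = turnout v x x'" unfolding turnout_def by simp
  have txx: "turnout v x x' > 0" using tp xA x'A neq by auto
  have m: "v x' x \<le> v x x'" using c1 xA x'A pxx by auto
  have m2: "v x' x / turnout v x' x \<le> v x x' / turnout v x x'"
    using m txx tsym by (simp add: divide_right_mono)
  have sR: "sum (v x') ?B \<le> sum (v x) ?B" using termR by (rule sum_mono)
  have sS: "(\<Sum>z\<in>?B. v x' z / turnout v x' z) \<le> (\<Sum>z\<in>?B. v x z / turnout v x z)"
    using termS by (rule sum_mono)
  show "SR A v x \<ge> SR A v x'" using SRx SRx' sR m by simp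
  show "SS A v x \<ge> SS A v x'" using SSx SSx' sS m2 by simp
  have eqR: "SR A v x = SR A v x' \<longleftrightarrow> v x' x = v x x' \<and> (\<forall>z\<in>?B. v x' z = v x z)"
  proof
    assume h: "SR A v x = SR A v x'"
    hence "v x' x = v x x'" "sum (v x') ?B = sum (v x) ?B" using SRx SRx' sR m by auto
    moreover have "\<forall>z\<in>?B. v x' z = v x z"
      using sum_eq_termwise[OF finB, of "v x'" "v x"] termR calculation(2) by blast
    ultimately show "v x' x = v x x' \<and> (\<forall>z\<in>?B. v x' z = v x z)" by blast
  next
    assume "v x' x = v x x' \<and> (\<forall>z\<in>?B. v x' z = v x z)"
    thus "SR A v x = SR A v x'" using SRx SRx' by simp
  qed
  have eqS: "SS A v x = SS A v x' \<Longrightarrow> v x' x = v x x' \<and> (\<forall>z\<in>?B. v x' z / turnout v x' z = v x z / turnout v x z)"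
  proof -
    assume h: "SS A v x = SS A v x'"
    hence e1: "v x' x / turnout v x' x = v x x' / turnout v x x'"
      and e2: "(\<Sum>z\<in>?B. v x' z / turnout v x' z) = (\<Sum>z\<in>?B. v x z / turnout v x z)"
      using SSx SSx' sS m2 by auto
    from e1 have "v x' x = v x x'" using txx tsym by simp
    moreover have "\<forall>z\<in>?B. v x' z / turnout v x' z = v x z / turnout v x z"
      using sum_eq_termwise[OF finB, of "\<lambda>z. v x' z / turnout v x' z" "\<lambda>z. v x z / turnout v x z"] termS e2 by blast
    ultimately show ?thesis by blast
  qed
  have teq: "v x' x = v x x' \<Longrightarrow> z \<in> ?B \<Longrightarrow> turnout v x z = turnout v x' z" for z
    using c4[of z] unfolding margin_def by auto
  show "SR A v x = SR A v x' \<longleftrightarrow> SS A v x = SS A v x'"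
  proof
    assume "SR A v x = SR A v x'"
    hence h: "v x' x = v x x' \<and> (\<forall>z\<in>?B. v x' z = v x z)" using eqR by blast
    show "SS A v x = SS A v x'" using SSx SSx' h teq tsym by simp
  next
    assume "SS A v x = SS A v x'"
    hence h: "v x' x = v x x' \<and> (\<forall>z\<in>?B. v x' z / turnout v x' z = v x z / turnout v x z)"
      using eqS by blast
    have "\<forall>z\<in>?B. v x' z = v x z"
    proof
      fix z assume z: "z \<in> ?B"
      have "turnout v x' z > 0" using tp z x'A by auto
      moreover have "turnout v x z = turnout v x' z" using teq h z by blast
      moreover have "v x' z / turnout v x' z = v x z / turnout v x z" using h z by blast
      ultimately show "v x' z = v x z" by (metis divide_cancel_right less_irrefl)
    qed
    thus "SR A v x = SR A v x'" using eqR h by blast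
  qed
qed

lemma chain:
  assumes fin: "finite A" and ll: "llull_matrix A v" and clc: "clc_order A v r"
    and tp: "\<forall>x\<in>A. \<forall>y\<in>A. x \<noteq> y \<longrightarrow> turnout v x y > 0"
  shows "\<forall>x y. x\<in>A \<and> y\<in>A \<and> prec r x y \<and> card {z\<in>A. prec r x z \<and> prec r z y} = n \<longrightarrow>
    SR A v x \<ge> SR A v y \<and> SS A v x \<ge> SS A v y \<and> (SR A v x = SR A v y \<longleftrightarrow> SS A v x = SS A v y)"
proof (induction n rule: less_induct)
  case (less n)
  have lin: "linear_order_on A r" using clc unfolding clc_order_def by blast
  show ?case
  proof (intro allI impI)
    fix x y assume h: "x\<in>A \<and> y\<in>A \<and> prec r x y \<and> card {z\<in>A. prec r x z \<and> prec r z y} = n"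
    show "SR A v x \<ge> SR A v y \<and> SS A v x \<ge> SS A v y \<and> (SR A v x = SR A v y \<longleftrightarrow> SS A v x = SS A v y)"
    proof (cases "\<exists>z\<in>A. prec r x z \<and> prec r z y")
      case False
      hence "imm_succ A r x y" using h unfolding imm_succ_def by blast
      thus ?thesis using step[OF fin ll clc tp] by blast
    next
      case True
      then obtain z where z: "z \<in> A" "prec r x z" "prec r z y" by blast
      let ?S = "{w\<in>A. prec r x w \<and> prec r w y}"
      have finS: "finite ?S" using fin by auto
      have sub1: "{w\<in>A. prec r x w \<and> prec r w z} \<subset> ?S"
      proof
        show "{w\<in>A. prec r x w \<and> prec r w z} \<subseteq> ?S" using prec_trans[OF lin] z by blast
        show "{w\<in>A. prec r x w \<and> prec r w z} \<noteq> ?S"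
        proof
          assume e: "{w\<in>A. prec r x w \<and> prec r w z} = ?S"
          have "z \<in> ?S" using z by blast
          thus False unfolding e[symmetric] by (simp add: prec_def)
        qed
      qed
      have sub2: "{w\<in>A. prec r z w \<and> prec r w y} \<subset> ?S"
      proof
        show "{w\<in>A. prec r z w \<and> prec r w y} \<subseteq> ?S" using prec_trans[OF lin] z by blast
        show "{w\<in>A. prec r z w \<and> prec r w y} \<noteq> ?S"
        proof
          assume e: "{w\<in>A. prec r z w \<and> prec r w y} = ?S"
          have "z \<in> ?S" using z by blast
          thus False unfolding e[symmetric] by (simp add: prec_def)
        qed
      qed
      have l1: "card {w\<in>A. prec r x w \<and> prec r w z} < n" using psubset_card_mono[OF finS sub1] h by simp
      have l2: "card {w\<in>A. prec r z w \<and> prec r w y} < n" using psubset_card_mono[OF finS sub2] h by simp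
      have IH1: "SR A v x \<ge> SR A v z \<and> SS A v x \<ge> SS A v z \<and> (SR A v x = SR A v z \<longleftrightarrow> SS A v x = SS A v z)"
        using less[OF l1] h z by blast
      have IH2: "SR A v z \<ge> SR A v y \<and> SS A v z \<ge> SS A v y \<and> (SR A v z = SR A v y \<longleftrightarrow> SS A v z = SS A v y)"
        using less[OF l2] h z by blast
      show ?thesis using IH1 IH2 by (smt (verit))
    qed
  qed
qed

theorem corollary3p7:
  fixes A :: "'a set" and v :: "'a \<Rightarrow> 'a \<Rightarrow> real"
  assumes "finite A" and "card A \<ge> 2"
    and "llull_matrix A v" and "has_clc_structure A v"
    and "\<forall>x\<in>A. \<forall>y\<in>A. x \<noteq> y \<longrightarrow> turnout v x y > 0"
  defines "\<rho> \<equiv> (\<lambda>x. (\<Sum>y\<in>A - {x}. v x y) / (real (card A) - 1))"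
    and "\<sigma> \<equiv> (\<lambda>x. (\<Sum>y\<in>A - {x}. v x y / turnout v x y) / (real (card A) - 1))"
  shows "\<forall>x\<in>A. \<forall>y\<in>A. \<sigma> x > \<sigma> y \<longleftrightarrow> \<rho> x > \<rho> y"
proof -
  obtain r where clc: "clc_order A v r" using assms(4) unfolding has_clc_structure_def by blast
  have lin: "linear_order_on A r" using clc unfolding clc_order_def by blast
  have Npos: "real (card A) - 1 > 0" using assms(2) by simp
  have rw: "\<rho> x > \<rho> y \<longleftrightarrow> SR A v x > SR A v y" "\<sigma> x > \<sigma> y \<longleftrightarrow> SS A v x > SS A v y" for x y
    unfolding \<rho>_def \<sigma>_def SR_def SS_def using Npos by (auto simp: divide_strict_right_mono divide_less_cancel)
  have P: "SR A v x \<ge> SR A v y \<and> SS A v x \<ge> SS A v y \<and> (SR A v x = SR A v y \<longleftrightarrow> SS A v x = SS A v y)"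
    if "x \<in> A" "y \<in> A" "prec r x y" for x y
    using chain[OF assms(1,3) clc assms(5)] that by blast
  show ?thesis
  proof (intro ballI)
    fix x y assume x: "x \<in> A" and y: "y \<in> A"
    show "\<sigma> x > \<sigma> y \<longleftrightarrow> \<rho> x > \<rho> y"
    proof (cases "x = y")
      case True thus ?thesis by simp
    next
      case False
      hence "prec r x y \<or> prec r y x" using prec_total[OF lin x y] by blast
      thus ?thesis unfolding rw using P x y by fastforce
    qed
  qed
qed

end
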